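(* Let $(\boldsymbol{\Sigma},\sigma)$ be a primitive Markov subshift on a countable alphabet, with associated set $\mathbb F$. Suppose the uniformly continuous potential $A:\boldsymbol\Sigma\to\mathbb R$ is bounded above and satisfies $\inf A|_{\bigcup_{i\in\mathbb F}[i]}>-\infty$. Then $$\beta_A=\inf_{f\in C^0(\boldsymbol\Sigma)}\ \sup_{\mathbf x\in\boldsymbol\Sigma}\big(A+f-f\circ\sigma\big)(\mathbf x).$$
   Context: Let $\mathbf M:\mathbb Z_+\times\mathbb Z_+\to\{0,1\}$ be a transition matrix. Put $\mathcal B_0=\{i:\mathbf M(i,j)=1\text{ for some }j\}$, $\mathcal B_n=\{i:\mathbf M(i,j)=1\text{ for some }j\in\mathcal B_{n-1}\}$. $\mathbf M$ is primitive if there exist $\mathbb F\subseteq\mathbb Z_+$ and an integer $K_0\ge0$ such that for all $i,j\in\bigcap_{n\ge0}\mathcal B_n$ there are $\ell_1,\dots,\ell_{K_0}\in\mathbb F$ with $\mathbf M(i,\ell_1)\mathbf M(\ell_1,\ell_2)\cdots\mathbf M(\ell_{K_0},j)=1$. $\boldsymbol\Sigma=\{\mathbf x\in\mathbb Z_+^{\mathbb Z_+}:\mathbf M(x_j,x_{j+1})=1\ \forall j\}$ with metric $d(\mathbf x,\mathbf y)=\lambda^{\min\{j:x_j\neq y_j\}}$, $\lambda\in(0,1)$ fixed; $\sigma$ the left shift; $[i]=\{\mathbf x:x_0=i\}$. $C^0(\boldsymbol\Sigma)$ = continuous real-valued functions on $\boldsymbol\Sigma$. $\mathcal M_\sigma$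 = $\sigma$-invariant Borel probabilities; $\beta_A=\sup_{\mu\in\mathcal M_\sigma}\int A\,d\mu$. $\mathrm{Var}_k(A)=\sup\{A(\mathbf x)-A(\mathbf y):d(\mathbf x,\mathbf y)\le\lambda^k\}$; uniformly continuous means $\mathrm{Var}_k(A)\to0$. *)

theory Defs
  imports "HOL-Probability.Probability"
begin

(* Alphabet Z_+ is rendered as nat. A transition matrix M : Z_+ x Z_+ -> {0,1}
   is rendered as a relation M :: nat => nat => bool (M i j <-> M(i,j) = 1). *)

fun Bset :: "(nat \<Rightarrow> nat \<Rightarrow> bool) \<Rightarrow> nat \<Rightarrow> nat set" where
  "Bset M 0 = {i. \<exists>j. M i j}"
| "Bset M (Suc n) = {i. \<exists>j\<in>Bset M n. M i j}"

definition primitive_with :: "(nat \<Rightarrow> nat \<Rightarrow> bool) \<Rightarrow> nat set \<Rightarrow> nat \<Rightarrow> bool" where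
  "primitive_with M F K0 \<longleftrightarrow>
     (\<forall>i\<in>(\<Inter>n. Bset M n). \<forall>j\<in>(\<Inter>n. Bset M n).
        \<exists>l :: nat \<Rightarrow> nat. l 0 = i \<and> l (Suc K0) = j \<and>
          (\<forall>k\<in>{1..K0}. l k \<in> F) \<and> (\<forall>k\<le>K0. M (l k) (l (Suc k))))"

definition primitive :: "(nat \<Rightarrow> nat \<Rightarrow> bool) \<Rightarrow> bool" where
  "primitive M \<longleftrightarrow> (\<exists>F K0. primitive_with M F K0)"

definition Sigma_M :: "(nat \<Rightarrow> nat \<Rightarrow> bool) \<Rightarrow> (nat \<Rightarrow> nat) set" where
  "Sigma_M M = {x. \<forall>j. M (x j) (x (Suc j))}"

definition shift :: "(nat \<Rightarrow> nat) \<Rightarrow> (nat \<Rightarrow> nat)" where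
  "shift x = (\<lambda>j. x (Suc j))"

definition dist_lam :: "real \<Rightarrow> (nat \<Rightarrow> nat) \<Rightarrow> (nat \<Rightarrow> nat) \<Rightarrow> real" where
  "dist_lam lam x y = (if x = y then 0 else lam ^ (LEAST j. x j \<noteq> y j))"

definition cyl :: "(nat \<Rightarrow> nat \<Rightarrow> bool) \<Rightarrow> nat \<Rightarrow> (nat \<Rightarrow> nat) set" where
  "cyl M i = {x \<in> Sigma_M M. x 0 = i}"

definition C0 :: "real \<Rightarrow> (nat \<Rightarrow> nat \<Rightarrow> bool) \<Rightarrow> ((nat \<Rightarrow> nat) \<Rightarrow> real) set" where
  "C0 lam M = {f. \<forall>x\<in>Sigma_M M. \<forall>e>0. \<exists>\<delta>>0. \<forall>y\<in>Sigma_M M.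
                   dist_lam lam x y < \<delta> \<longrightarrow> \<bar>f y - f x\<bar> < e}"

(* Var_k(A) -> 0, unfolded: for every e > 0 there is k with
   A x - A y <= e whenever x, y in Sigma and d(x,y) <= lam^k *)
definition unif_cont_pot :: "real \<Rightarrow> (nat \<Rightarrow> nat \<Rightarrow> bool) \<Rightarrow> ((nat \<Rightarrow> nat) \<Rightarrow> real) \<Rightarrow> bool" where
  "unif_cont_pot lam M A \<longleftrightarrow>
     (\<forall>e>0. \<exists>k. \<forall>x\<in>Sigma_M M. \<forall>y\<in>Sigma_M M.
        dist_lam lam x y \<le> lam ^ k \<longrightarrow> A x - A y \<le> e)"

(* Borel sigma-algebra of Sigma (product topology of the discrete alphabet,
   which is the topology of d) *)
definition borel_Sigma :: "(nat \<Rightarrow> nat \<Rightarrow> bool) \<Rightarrow> (nat \<Rightarrow> nat) measure" where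
  "borel_Sigma M = restrict_space borel (Sigma_M M)"

definition invariant_probs :: "(nat \<Rightarrow> nat \<Rightarrow> bool) \<Rightarrow> (nat \<Rightarrow> nat) measure set" where
  "invariant_probs M = {\<mu>. prob_space \<mu> \<and> sets \<mu> = sets (borel_Sigma M) \<and>
      shift \<in> measurable \<mu> \<mu> \<and> distr \<mu> \<mu> shift = \<mu>}"

definition ext_integral :: "(nat \<Rightarrow> nat) measure \<Rightarrow> ((nat \<Rightarrow> nat) \<Rightarrow> real) \<Rightarrow> ereal" where
  "ext_integral \<mu> A =
     enn2ereal (\<integral>\<^sup>+ x. ennreal (max (A x) 0) \<partial>\<mu>) - enn2ereal (\<integral>\<^sup>+ x. ennreal (max (- A x) 0) \<partial>\<mu>)"

definition beta :: "(nat \<Rightarrow> nat \<Rightarrow> bool) \<Rightarrow> ((nat \<Rightarrow> nat) \<Rightarrow> real) \<Rightarrow> ereal" where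
  "beta M A = (SUP \<mu>\<in>invariant_probs M. ext_integral \<mu> A)"

end

theory Submission
  imports Defs
begin


definition sh :: "nat \<Rightarrow> (nat \<Rightarrow> nat) \<Rightarrow> (nat \<Rightarrow> nat)" where
  "sh j y = (\<lambda>i. y (i + j))"

definition agree :: "nat \<Rightarrow> (nat \<Rightarrow> nat) \<Rightarrow> (nat \<Rightarrow> nat) \<Rightarrow> bool" where
  "agree m a b \<longleftrightarrow> (\<forall>i<m. a i = b i)"

lemma sh_0[simp]: "sh 0 y = y" by (simp add: sh_def)
lemma sh_Suc: "sh (Suc j) y = shift (sh j y)" by (simp add: sh_def shift_def)
lemma sh_sh: "sh i (sh j y) = sh (i + j) y" by (simp add: sh_def add.assoc)
lemma shift_Sigma: "x \<in> Sigma_M M \<Longrightarrow> shift x \<in> Sigma_M M"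
  by (simp add: Sigma_M_def shift_def)
lemma sh_Sigma: "x \<in> Sigma_M M \<Longrightarrow> sh j x \<in> Sigma_M M"
  by (simp add: Sigma_M_def sh_def)

lemma agree_sym: "agree m a b \<Longrightarrow> agree m b a" by (auto simp: agree_def)
lemma agree_mono: "agree m a b \<Longrightarrow> k \<le> m \<Longrightarrow> agree k a b" by (auto simp: agree_def)

lemma agree_dist:
  assumes "0 < lam" "lam < 1" "agree k a b"
  shows "dist_lam lam a b \<le> lam ^ k"
proof (cases "a = b")
  case True then show ?thesis using assms by (simp add: dist_lam_def)
next
  case False
  then obtain j where j: "a j \<noteq> b j" by auto
  have "k \<le> (LEAST j. a j \<noteq> b j)"
  proof (rule ccontr)
    assume "\<not> ?thesis"
    then have "a (LEAST j. a j \<noteq> b j) = b (LEAST j. a j \<noteq> b j)" using assms(3) by (auto simp: agree_def)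
    moreover have "a (LEAST j. a j \<noteq> b j) \<noteq> b (LEAST j. a j \<noteq> b j)" using j by (rule LeastI)
    ultimately show False by simp
  qed
  then show ?thesis using False assms by (simp add: dist_lam_def power_decreasing)
qed

lemma dist_agree:
  assumes "0 < lam" "lam < 1" "dist_lam lam a b < lam ^ m"
  shows "agree m a b"
proof (cases "a = b")
  case True then show ?thesis by (simp add: agree_def)
next
  case False
  then have "lam ^ (LEAST j. a j \<noteq> b j) < lam ^ m" using assms by (simp add: dist_lam_def)
  then have "m < (LEAST j. a j \<noteq> b j)" using assms by (simp add: power_strict_decreasing_iff)
  then show ?thesis unfolding agree_def using not_less_Least by (metis (mono_tags) less_trans)
qed

lemma Sigma_Bset: "x \<in> Sigma_M M \<Longrightarrow> x j \<in> (\<Inter>n. Bset M n)"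
proof -
  assume x: "x \<in> Sigma_M M"
  have "\<forall>j. x j \<in> Bset M n" for n
    by (induction n) (use x in \<open>auto simp: Sigma_M_def\<close>)
  then show ?thesis by auto
qed

lemma open_agree: "open {y::nat\<Rightarrow>nat. agree m x y}"
proof -
  have "open {f::nat\<Rightarrow>nat. \<forall>i\<in>{..<m}. f (id i) \<in> {x i}}"
    by (rule product_topology_basis') (simp, rule discrete_topology_class.open_discrete)
  moreover have "{f::nat\<Rightarrow>nat. \<forall>i\<in>{..<m}. f (id i) \<in> {x i}} = {y. agree m x y}"
    by (auto simp: agree_def)
  ultimately show ?thesis by simp
qed

lemma meas_agree_cont:
  fixes h :: "(nat \<Rightarrow> nat) \<Rightarrow> real"
  assumes "\<And>x e. x \<in> Sigma_M M \<Longrightarrow> e > 0 \<Longrightarrow> \<exists>m. \<forall>y\<in>Sigma_M M. agree m x y \<longrightarrow> \<bar>h y - h x\<bar> < e"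
  shows "h \<in> borel_measurable (borel_Sigma M)"
  unfolding borel_Sigma_def
proof (rule borel_measurable_continuous_on_restrict, unfold continuous_on_topological, intro ballI allI impI)
  fix x B assume x: "x \<in> Sigma_M M" and B: "open B" "h x \<in> B"
  then obtain e where e: "e > 0" "ball (h x) e \<subseteq> B" using openE by blast
  obtain m where m: "\<forall>y\<in>Sigma_M M. agree m x y \<longrightarrow> \<bar>h y - h x\<bar> < e" using assms[OF x e(1)] by blast
  show "\<exists>A. open A \<and> x \<in> A \<and> (\<forall>y\<in>Sigma_M M. y \<in> A \<longrightarrow> h y \<in> B)"
  proof (intro exI conjI ballI impI)
    show "open {y. agree m x y}" by (rule open_agree)
    show "x \<in> {y. agree m x y}" by (simp add: agree_def)
    fix y assume "y \<in> Sigma_M M" "y \<in> {y. agree m x y}"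
    then have "\<bar>h y - h x\<bar> < e" using m by auto
    then show "h y \<in> B" using e(2) by (auto simp: dist_real_def ball_def abs_minus_commute)
  qed
qed

lemma C0_meas:
  assumes "0 < lam" "lam < 1" "f \<in> C0 lam M"
  shows "f \<in> borel_measurable (borel_Sigma M)"
proof (rule meas_agree_cont)
  fix x e assume x: "x \<in> Sigma_M M" and e: "(e::real) > 0"
  obtain d where d: "d > 0" "\<forall>y\<in>Sigma_M M. dist_lam lam x y < d \<longrightarrow> \<bar>f y - f x\<bar> < e"
    using assms(3) x e unfolding C0_def by blast
  obtain m where "lam ^ m < d" using real_arch_pow_inv[OF d(1) assms(2)] by blast
  then have "lam ^ Suc m < d" using assms by (smt (verit) mult_left_le_one_le power_Suc zero_le_power)
  show "\<exists>m. \<forall>y\<in>Sigma_M M. agree m x y \<longrightarrow> \<bar>f y - f x\<bar> < e"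
  proof (intro exI ballI impI)
    fix y assume "y \<in> Sigma_M M" "agree (Suc m) x y"
    then have "dist_lam lam x y \<le> lam ^ Suc m" using agree_dist assms by blast
    then show "\<bar>f y - f x\<bar> < e" using d \<open>lam ^ Suc m < d\<close> \<open>y \<in> _\<close> by auto
  qed
qed

lemma UC_agree:
  assumes "0 < lam" "lam < 1" "unif_cont_pot lam M A" "e > 0"
  shows "\<exists>k. \<forall>a\<in>Sigma_M M. \<forall>b\<in>Sigma_M M. agree k a b \<longrightarrow> \<bar>A a - A b\<bar> \<le> e"
proof -
  obtain k where k: "\<forall>x\<in>Sigma_M M. \<forall>y\<in>Sigma_M M. dist_lam lam x y \<le> lam ^ k \<longrightarrow> A x - A y \<le> e"
    using assms unfolding unif_cont_pot_def by blast
  show ?thesis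
  proof (intro exI ballI impI)
    fix a b assume ab: "a \<in> Sigma_M M" "b \<in> Sigma_M M" "agree k a b"
    then have "A a - A b \<le> e" "A b - A a \<le> e" using k agree_dist[OF assms(1,2)] agree_sym by blast+
    then show "\<bar>A a - A b\<bar> \<le> e" by linarith
  qed
qed

lemma A_meas:
  assumes "0 < lam" "lam < 1" "unif_cont_pot lam M A"
  shows "A \<in> borel_measurable (borel_Sigma M)"
proof (rule meas_agree_cont)
  fix x e assume x: "x \<in> Sigma_M M" and e: "(e::real) > 0"
  obtain k where "\<forall>a\<in>Sigma_M M. \<forall>b\<in>Sigma_M M. agree k a b \<longrightarrow> \<bar>A a - A b\<bar> \<le> e/2"
    using UC_agree[OF assms, of "e/2"] e by auto
  then show "\<exists>m. \<forall>y\<in>Sigma_M M. agree m x y \<longrightarrow> \<bar>A y - A x\<bar> < e"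
    using x e by (metis agree_sym half_gt_zero less_add_same_cancel1 field_sum_of_halves order_le_less_trans)
qed



lemma ext_integral_integrable:
  assumes "integrable \<mu> h"
  shows "ext_integral \<mu> h = ereal (integral\<^sup>L \<mu> h)"
proof -
  have e1: "(\<lambda>x. ennreal (max (h x) 0)) = (\<lambda>x. ennreal (h x))"
    by (auto simp: max_def ennreal_neg)
  have e2: "(\<lambda>x. ennreal (max (- h x) 0)) = (\<lambda>x. ennreal (- h x))"
    by (auto simp: max_def ennreal_neg)
  have f1: "(\<integral>\<^sup>+ x. ennreal (h x) \<partial>\<mu>) < \<infinity>"
  proof -
    have "(\<integral>\<^sup>+ x. ennreal (h x) \<partial>\<mu>) \<le> (\<integral>\<^sup>+ x. ennreal (norm (h x)) \<partial>\<mu>)"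
      by (intro nn_integral_mono) auto
    also have "\<dots> < \<infinity>" using assms by (simp add: integrable_iff_bounded)
    finally show ?thesis .
  qed
  have f2: "(\<integral>\<^sup>+ x. ennreal (- h x) \<partial>\<mu>) < \<infinity>"
  proof -
    have "(\<integral>\<^sup>+ x. ennreal (- h x) \<partial>\<mu>) \<le> (\<integral>\<^sup>+ x. ennreal (norm (h x)) \<partial>\<mu>)"
      by (intro nn_integral_mono) auto
    also have "\<dots> < \<infinity>" using assms by (simp add: integrable_iff_bounded)
    finally show ?thesis .
  qed
  have c: "enn2ereal a = ereal (enn2real a)" if "a < \<infinity>" for a
    using that by (cases a rule: ennreal_cases) auto
  show ?thesis
    unfolding ext_integral_def e1 e2 real_lebesgue_integral_def[OF assms]
    using c[OF f1] c[OF f2] by simp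
qed

lemma fatou_cob:
  fixes \<psi> u :: "'a \<Rightarrow> real"
  assumes P: "prob_space \<mu>" and T: "T \<in> measurable \<mu> \<mu>" and inv: "distr \<mu> \<mu> T = \<mu>"
    and u: "u \<in> borel_measurable \<mu>" and psi: "integrable \<mu> \<psi>"
    and le: "\<And>x. x \<in> space \<mu> \<Longrightarrow> \<psi> x \<le> u (T x) - u x"
  shows "integral\<^sup>L \<mu> \<psi> \<le> 0"
proof -
  interpret prob_space \<mu> by (rule P)
  define cl where "cl = (\<lambda>(N::nat) (t::real). max (- real N) (min (real N) t))"
  define h where "h = (\<lambda>N x. cl N (u (T x)) - cl N (u x))"
  define m where "m = (\<lambda>x. min (\<psi> x) 0)"
  have clm[measurable]: "(\<lambda>x. cl N (u x)) \<in> borel_measurable \<mu>" for N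
    unfolding cl_def using u by measurable
  have clTm[measurable]: "(\<lambda>x. cl N (u (T x))) \<in> borel_measurable \<mu>" for N
    using measurable_comp[OF T clm[of N]] by (simp add: o_def)
  have clb: "\<bar>cl N t\<bar> \<le> real N" for N t unfolding cl_def by auto
  have int_cl: "integrable \<mu> (\<lambda>x. cl N (u x))" for N
    by (rule integrable_const_bound[where B="real N"]) (auto intro!: AE_I2 simp: clb)
  have int_clT: "integrable \<mu> (\<lambda>x. cl N (u (T x)))" for N
    by (rule integrable_const_bound[where B="real N"]) (auto intro!: AE_I2 simp: clb)
  have inv_int: "integral\<^sup>L \<mu> (\<lambda>x. cl N (u (T x))) = integral\<^sup>L \<mu> (\<lambda>x. cl N (u x))" for N
  proof -
    have "integral\<^sup>L \<mu> (\<lambda>x. cl N (u x)) = integral\<^sup>L (distr \<mu> \<mu> T) (\<lambda>x. cl N (u x))"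
      using inv by simp
    also have "\<dots> = integral\<^sup>L \<mu> (\<lambda>x. cl N (u (T x)))"
      by (rule integral_distr[OF T clm])
    finally show ?thesis by simp
  qed
  have int_h: "integrable \<mu> (h N)" for N unfolding h_def using int_cl int_clT by auto
  have int_h0: "integral\<^sup>L \<mu> (h N) = 0" for N
    unfolding h_def using int_cl int_clT inv_int by simp
  have int_m: "integrable \<mu> m" unfolding m_def using psi by auto
  have hm: "m x \<le> h N x" if "x \<in> space \<mu>" for N x
  proof -
    have "min (u (T x) - u x) 0 \<le> cl N (u (T x)) - cl N (u x)"
      unfolding cl_def by (auto simp: min_def max_def)
    then show ?thesis using le[OF that] unfolding m_def h_def by linarith
  qed
  have ev: "eventually (\<lambda>N. h N x = u (T x) - u x) sequentially" for x
  proof -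
    obtain N0 :: nat where "\<bar>u (T x)\<bar> \<le> real N0" "\<bar>u x\<bar> \<le> real N0"
      by (metis abs_ge_zero max.cobounded1 max.cobounded2 order.trans real_arch_simple)
    then show ?thesis unfolding eventually_sequentially h_def cl_def
      by (intro exI[of _ N0]) (auto simp: min_def max_def)
  qed
  have "(\<integral>\<^sup>+ x. ennreal (\<psi> x - m x) \<partial>\<mu>) \<le> (\<integral>\<^sup>+ x. liminf (\<lambda>N. ennreal (h N x - m x)) \<partial>\<mu>)"
  proof (rule nn_integral_mono)
    fix x assume x: "x \<in> space \<mu>"
    have "((\<lambda>N. ennreal (h N x - m x)) \<longlongrightarrow> ennreal (u (T x) - u x - m x)) sequentially"
      by (rule tendsto_eventually) (use ev[of x] in \<open>auto elim: eventually_mono\<close>)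
    then have "liminf (\<lambda>N. ennreal (h N x - m x)) = ennreal (u (T x) - u x - m x)"
      by (simp add: lim_imp_Liminf)
    then show "ennreal (\<psi> x - m x) \<le> liminf (\<lambda>N. ennreal (h N x - m x))"
      using le[OF x] by (simp add: ennreal_leI)
  qed
  also have "\<dots> \<le> liminf (\<lambda>N. \<integral>\<^sup>+ x. ennreal (h N x - m x) \<partial>\<mu>)"
    by (rule nn_integral_liminf) (use int_h int_m in auto)
  also have "(\<lambda>N. \<integral>\<^sup>+ x. ennreal (h N x - m x) \<partial>\<mu>) = (\<lambda>N. ennreal (- integral\<^sup>L \<mu> m))"
  proof
    fix N
    have "(\<integral>\<^sup>+ x. ennreal (h N x - m x) \<partial>\<mu>) = ennreal (integral\<^sup>L \<mu> (\<lambda>x. h N x - m x))"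
      by (rule nn_integral_eq_integral) (use int_h int_m hm in \<open>auto simp: AE_I2\<close>)
    also have "\<dots> = ennreal (- integral\<^sup>L \<mu> m)" using int_h int_m int_h0 by simp
    finally show "(\<integral>\<^sup>+ x. ennreal (h N x - m x) \<partial>\<mu>) = ennreal (- integral\<^sup>L \<mu> m)" .
  qed
  also have "liminf (\<lambda>N. ennreal (- integral\<^sup>L \<mu> m)) = ennreal (- integral\<^sup>L \<mu> m)"
    by (simp add: Liminf_const)
  finally have A: "(\<integral>\<^sup>+ x. ennreal (\<psi> x - m x) \<partial>\<mu>) \<le> ennreal (- integral\<^sup>L \<mu> m)" .
  have "(\<integral>\<^sup>+ x. ennreal (\<psi> x - m x) \<partial>\<mu>) = ennreal (integral\<^sup>L \<mu> (\<lambda>x. \<psi> x - m x))"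
    by (rule nn_integral_eq_integral) (use psi int_m in \<open>auto simp: AE_I2 m_def\<close>)
  also have "\<dots> = ennreal (integral\<^sup>L \<mu> \<psi> - integral\<^sup>L \<mu> m)" using psi int_m by simp
  finally have B: "ennreal (integral\<^sup>L \<mu> \<psi> - integral\<^sup>L \<mu> m) \<le> ennreal (- integral\<^sup>L \<mu> m)" using A by simp
  have "integral\<^sup>L \<mu> m \<le> integral\<^sup>L \<mu> (\<lambda>x. 0::real)"
    by (rule integral_mono) (use int_m in \<open>auto simp: m_def\<close>)
  then have "integral\<^sup>L \<mu> m \<le> 0" by simp
  then have "integral\<^sup>L \<mu> \<psi> - integral\<^sup>L \<mu> m \<le> - integral\<^sup>L \<mu> m"
    using B by (simp add: ennreal_le_iff)
  then show ?thesis by simp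
qed



lemma space_borel_Sigma[simp]: "space (borel_Sigma M) = Sigma_M M"
  by (simp add: borel_Sigma_def space_restrict_space)

lemma lower_bound:
  assumes mu: "\<mu> \<in> invariant_probs M" and f: "f \<in> borel_measurable (borel_Sigma M)"
    and Am: "A \<in> borel_measurable (borel_Sigma M)" and C: "\<forall>x\<in>Sigma_M M. A x \<le> C"
  shows "ext_integral \<mu> A \<le> (SUP x\<in>Sigma_M M. ereal (A x + f x - f (shift x)))"
proof -
  have P: "prob_space \<mu>" and S: "sets \<mu> = sets (borel_Sigma M)" and T: "shift \<in> measurable \<mu> \<mu>"
    and inv: "distr \<mu> \<mu> shift = \<mu>" using mu by (auto simp: invariant_probs_def)
  interpret prob_space \<mu> by (rule P)
  have sp: "space \<mu> = Sigma_M M" using sets_eq_imp_space_eq[OF S] by simp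
  have fm[measurable]: "f \<in> borel_measurable \<mu>" using f measurable_cong_sets[OF S refl] by blast
  have Amu[measurable]: "A \<in> borel_measurable \<mu>" using Am measurable_cong_sets[OF S refl] by blast
  obtain x0 where x0: "x0 \<in> Sigma_M M" using not_empty sp by auto
  define s where "s = (SUP x\<in>Sigma_M M. ereal (A x + f x - f (shift x)))"
  show ?thesis
  proof (cases "s = \<infinity>")
    case True then show ?thesis by (simp add: s_def)
  next
    case False
    have "ereal (A x0 + f x0 - f (shift x0)) \<le> s" unfolding s_def using x0 by (rule SUP_upper)
    then obtain s' where s': "s = ereal s'" using False by (cases s) auto
    have gle: "A x + f x - f (shift x) \<le> s'" if "x \<in> Sigma_M M" for x
    proof -
      have "ereal (A x + f x - f (shift x)) \<le> s" unfolding s_def using that by (rule SUP_upper)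
      then show ?thesis using s' by simp
    qed
    have pos_fin: "(\<integral>\<^sup>+ x. ennreal (max (A x) 0) \<partial>\<mu>) < \<infinity>"
    proof -
      have "(\<integral>\<^sup>+ x. ennreal (max (A x) 0) \<partial>\<mu>) \<le> (\<integral>\<^sup>+ x. ennreal (max C 0) \<partial>\<mu>)"
        by (intro nn_integral_mono) (use C sp in \<open>auto intro!: ennreal_leI\<close>)
      also have "\<dots> = ennreal (max C 0)" by (simp add: emeasure_space_1)
      finally show ?thesis by (simp add: order_le_less_trans)
    qed
    show ?thesis
    proof (cases "(\<integral>\<^sup>+ x. ennreal (max (- A x) 0) \<partial>\<mu>) = \<infinity>")
      case True
      then have "ext_integral \<mu> A = -\<infinity>"
        unfolding ext_integral_def using pos_fin
        by (cases "(\<integral>\<^sup>+ x. ennreal (max (A x) 0) \<partial>\<mu>)" rule: ennreal_cases) auto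
      then show ?thesis by simp
    next
      case False
      have "(\<integral>\<^sup>+ x. ennreal (norm (A x)) \<partial>\<mu>) = (\<integral>\<^sup>+ x. ennreal (max (A x) 0) + ennreal (max (- A x) 0) \<partial>\<mu>)"
        by (intro nn_integral_cong) (auto simp: max_def ennreal_neg)
      also have "\<dots> = (\<integral>\<^sup>+ x. ennreal (max (A x) 0) \<partial>\<mu>) + (\<integral>\<^sup>+ x. ennreal (max (- A x) 0) \<partial>\<mu>)"
        by (rule nn_integral_add) auto
      also have "\<dots> < \<infinity>" using pos_fin False by (simp add: less_top)
      finally have intA: "integrable \<mu> A" by (simp add: integrable_iff_bounded)
      have "integral\<^sup>L \<mu> (\<lambda>x. A x - s') \<le> 0"
      proof (rule fatou_cob[OF P T inv fm])
        show "integrable \<mu> (\<lambda>x. A x - s')" using intA by simp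
        fix x assume "x \<in> space \<mu>"
        then have "A x + f x - f (shift x) \<le> s'" using gle sp by simp
        then show "A x - s' \<le> f (shift x) - f x" by linarith
      qed
      then have "integral\<^sup>L \<mu> A \<le> s'" using intA by (simp add: prob_space)
      then show ?thesis using ext_integral_integrable[OF intA] s' s_def by simp
    qed
  qed
qed

lemma sh_mod:
  assumes "sh P q = q"
  shows "sh n q = sh (n mod P) q"
proof -
  have "sh (a * P + r) q = sh r q" for a r
    by (induction a) (simp_all, metis assms add.assoc add.commute sh_sh)
  then show ?thesis by (metis div_mult_mod_eq)
qed

lemma shift_meas: "shift \<in> measurable (borel_Sigma M) (borel_Sigma M)"
  unfolding borel_Sigma_def
proof (rule measurable_restrict_space3)
  have "continuous_on UNIV (shift :: (nat \<Rightarrow> nat) \<Rightarrow> _)"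
    unfolding shift_def by (intro continuous_on_coordinatewise_then_product) simp
  then show "shift \<in> borel_measurable borel" by (rule borel_measurable_continuous_onI)
  show "shift \<in> Sigma_M M \<rightarrow> Sigma_M M" using shift_Sigma by blast
qed

lemma per_bound:
  assumes Am: "A \<in> borel_measurable (borel_Sigma M)" and q: "q \<in> Sigma_M M" and P: "0 < P"
    and per: "sh P q = q"
  shows "ereal ((\<Sum>j<P. A (sh j q)) / P) \<le> beta M A"
proof -
  define U where "U = measure_pmf (pmf_of_set {..<P})"
  define g where "g = (\<lambda>i. sh i q)"
  define \<mu> where "\<mu> = distr U (borel_Sigma M) g"
  define rot where "rot = (\<lambda>i. Suc i mod P)"
  have ne: "{..<P} \<noteq> {}" using P by auto
  have gm: "g \<in> measurable U (borel_Sigma M)"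
    unfolding U_def g_def using sh_Sigma[OF q] by auto
  have pU: "prob_space U" unfolding U_def by (rule prob_space_measure_pmf)
  have pmu: "prob_space \<mu>" unfolding \<mu>_def by (rule prob_space.prob_space_distr[OF pU gm])
  have Smu: "sets \<mu> = sets (borel_Sigma M)" unfolding \<mu>_def by simp
  have shm: "shift \<in> measurable \<mu> \<mu>"
    using shift_meas measurable_cong_sets[OF Smu Smu] by blast
  have inj: "inj_on rot {..<P}"
  proof
    fix i j assume "i \<in> {..<P}" "j \<in> {..<P}" "rot i = rot j"
    moreover have r: "k < P \<Longrightarrow> rot k = (if Suc k = P then 0 else Suc k)" for k
      unfolding rot_def by auto
    ultimately show "i = j" by (auto split: if_splits)
  qed
  have img: "rot ` {..<P} = {..<P}"
    by (rule endo_inj_surj) (use inj P in \<open>auto simp: rot_def\<close>)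
  have "distr \<mu> \<mu> shift = distr \<mu> (borel_Sigma M) shift"
    by (rule distr_cong) (simp_all add: Smu)
  also have "\<dots> = distr U (borel_Sigma M) (shift \<circ> g)"
    unfolding \<mu>_def by (rule distr_distr[OF shift_meas gm])
  also have "\<dots> = distr U (borel_Sigma M) (g \<circ> rot)"
  proof (rule distr_cong)
    fix i show "(shift \<circ> g) i = (g \<circ> rot) i"
      unfolding g_def rot_def o_def using sh_mod[OF per, of "Suc i"] sh_Suc by simp
  qed simp_all
  also have "\<dots> = distr (distr U (count_space UNIV) rot) (borel_Sigma M) g"
    by (rule distr_distr[symmetric]) (use gm in \<open>auto simp: U_def\<close>)
  also have "distr U (count_space UNIV) rot = U"
    unfolding U_def map_pmf_rep_eq[symmetric] using map_pmf_of_set_inj[OF inj ne] img by simp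
  finally have inv: "distr \<mu> \<mu> shift = \<mu>" unfolding \<mu>_def by simp
  have mu_in: "\<mu> \<in> invariant_probs M" unfolding invariant_probs_def using pmu Smu shm inv by auto
  have intU: "integrable U (\<lambda>i. A (g i))"
    unfolding U_def by (rule integrable_measure_pmf_finite) (use ne in simp)
  have intA: "integrable \<mu> A"
    unfolding \<mu>_def using integrable_distr_eq[OF gm Am] intU by simp
  have "integral\<^sup>L \<mu> A = integral\<^sup>L U (\<lambda>i. A (g i))"
    unfolding \<mu>_def by (rule integral_distr[OF gm Am])
  also have "\<dots> = (\<Sum>j<P. A (sh j q)) / P"
    unfolding U_def g_def using ne by (subst integral_pmf_of_set) auto
  finally have "ext_integral \<mu> A = ereal ((\<Sum>j<P. A (sh j q)) / P)"
    using ext_integral_integrable[OF intA] by simp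
  then show ?thesis unfolding beta_def using mu_in by (metis SUP_upper)
qed



definition cat :: "nat \<Rightarrow> (nat \<Rightarrow> nat) \<Rightarrow> (nat \<Rightarrow> nat) \<Rightarrow> (nat \<Rightarrow> nat)" where
  "cat n w x = (\<lambda>j. if j < n then w j else x (j - n))"

lemma sh_cat[simp]: "sh n (cat n w x) = x" by (simp add: sh_def cat_def)

lemma cat_Sigma:
  assumes "\<And>j. Suc j < n \<Longrightarrow> M (w j) (w (Suc j))" "0 < n \<Longrightarrow> M (w (n - 1)) (x 0)"
    "x \<in> Sigma_M M"
  shows "cat n w x \<in> Sigma_M M"
  unfolding Sigma_M_def cat_def
proof (intro CollectI allI)
  fix j
  consider "Suc j < n" | "Suc j = n" | "n \<le> j" by linarith
  then show "M (if j < n then w j else x (j - n)) (if Suc j < n then w (Suc j) else x (Suc j - n))"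
  proof cases
    case 1 then show ?thesis using assms(1) by auto
  next
    case 2 then show ?thesis using assms(2) by auto
  next
    case 3 then have "Suc j - n = Suc (j - n)" by auto
    then show ?thesis using 3 assms(3) by (auto simp: Sigma_M_def)
  qed
qed

definition pth :: "(nat \<Rightarrow> nat \<Rightarrow> bool) \<Rightarrow> nat set \<Rightarrow> nat \<Rightarrow> nat \<Rightarrow> nat \<Rightarrow> (nat \<Rightarrow> nat) \<Rightarrow> bool" where
  "pth M F K0 a d l \<longleftrightarrow> l 0 = a \<and> l (Suc K0) = d \<and> (\<forall>j\<in>{1..K0}. l j \<in> F) \<and> (\<forall>j\<le>K0. M (l j) (l (Suc j)))"

lemma pth_cat_Sigma:
  assumes "pth M F K0 a d l" "x \<in> Sigma_M M" "x 0 = d"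
  shows "cat (Suc K0) l x \<in> Sigma_M M"
  using assms by (intro cat_Sigma) (auto simp: pth_def)

lemma sum_split_add: "(\<Sum>j<n + m. g j) = (\<Sum>j<n. g j) + (\<Sum>t<m. g (n + t)::real)" for n m :: nat
  by (induction m) auto

locale constr =
  fixes M :: "nat \<Rightarrow> nat \<Rightarrow> bool" and F :: "nat set" and K0 :: nat and A :: "(nat \<Rightarrow> nat) \<Rightarrow> real"
    and lam b c :: real and z :: "nat \<Rightarrow> nat" and k :: nat
  assumes lam0: "0 < lam" and lam1: "lam < 1" and prim: "primitive_with M F K0"
    and UC: "\<And>\<eta>. \<eta> > 0 \<Longrightarrow> \<exists>m. \<forall>a\<in>Sigma_M M. \<forall>a'\<in>Sigma_M M. agree m a a' \<longrightarrow> \<bar>A a - A a'\<bar> \<le> \<eta>"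
    and per: "\<And>q P. q \<in> Sigma_M M \<Longrightarrow> 0 < P \<Longrightarrow> sh P q = q \<Longrightarrow> (\<Sum>j<P. A (sh j q)) \<le> real P * b"
    and z: "z \<in> Sigma_M M" and bc: "b < c" and k1: "1 \<le> k"
    and kUC: "\<forall>a\<in>Sigma_M M. \<forall>a'\<in>Sigma_M M. agree k a a' \<longrightarrow> \<bar>A a - A a'\<bar> \<le> (c - b) / 2"
begin

definition "e = (c - b) / 2"
definition "Lp a = (SOME l. pth M F K0 a (z 0) l)"
definition "Lq a = (SOME l. pth M F K0 (z (k - 1)) a l)"
definition "T x = {(n, y). y \<in> Sigma_M M \<and> agree k y z \<and> sh n y = x}"
definition "S n y = (\<Sum>j<n. A (sh j y) - c)"
definition "FF x = (\<lambda>p. S (fst p) (snd p)) ` T x"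
definition "f x = Sup (FF x)"
definition "v x = cat (k - 1) x (cat (Suc K0) (Lp (x (k - 1))) z)"
definition "D x = real (k + K0) * (b + e) - (\<Sum>t<k + K0. A (sh t (v x)))"

lemma e_pos: "0 < e" using bc by (simp add: e_def)

lemma pth_ex: "x \<in> Sigma_M M \<Longrightarrow> y \<in> Sigma_M M \<Longrightarrow> \<exists>l. pth M F K0 (x i) (y j) l"
  using prim Sigma_Bset[of x M i] Sigma_Bset[of y M j] unfolding primitive_with_def pth_def by blast

lemma Lp_pth: "x \<in> Sigma_M M \<Longrightarrow> pth M F K0 (x i) (z 0) (Lp (x i))"
  unfolding Lp_def using pth_ex[OF _ z] by (rule someI_ex) 

lemma Lq_pth: "x \<in> Sigma_M M \<Longrightarrow> pth M F K0 (z (k - 1)) (x 0) (Lq (x 0))"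
  unfolding Lq_def using pth_ex[OF z] by (rule someI_ex)

lemma v_Sigma: assumes x: "x \<in> Sigma_M M" shows "v x \<in> Sigma_M M"
proof -
  have W: "cat (Suc K0) (Lp (x (k - 1))) z \<in> Sigma_M M"
    by (rule pth_cat_Sigma[OF Lp_pth[OF x] z]) simp
  have l0: "Lp (x (k - 1)) 0 = x (k - 1)" using Lp_pth[OF x, of "k - 1"] by (simp add: pth_def)
  show ?thesis unfolding v_def
  proof (rule cat_Sigma[OF _ _ W])
    show "M (x j) (x (Suc j))" for j using x by (simp add: Sigma_M_def)
    assume "0 < k - 1"
    then have "Suc (k - 1 - 1) = k - 1" by simp
    moreover have "M (x (k - 1 - 1)) (x (Suc (k - 1 - 1)))" using x by (simp add: Sigma_M_def)
    ultimately show "M (x (k - 1 - 1)) (cat (Suc K0) (Lp (x (k - 1))) z 0)"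
      using l0 by (simp add: cat_def)
  qed
qed

lemma v_agree: "agree k x x' \<Longrightarrow> v x = v x'"
proof -
  assume a: "agree k x x'"
  then have "x (k - 1) = x' (k - 1)" using k1 by (simp add: agree_def)
  moreover have "cat (k - 1) x w = cat (k - 1) x' w" for w using a by (auto simp: cat_def agree_def)
  ultimately show ?thesis unfolding v_def by metis
qed

lemma D_agree: "agree k x x' \<Longrightarrow> D x = D x'"
  unfolding D_def using v_agree by simp

lemma T_Sigma: "(n, y) \<in> T x \<Longrightarrow> x \<in> Sigma_M M"
  unfolding T_def using sh_Sigma by auto

lemma T_ne: assumes x: "x \<in> Sigma_M M" shows "T x \<noteq> {}"
proof -
  define l where "l = Lq (x 0)"
  have p: "pth M F K0 (z (k - 1)) (x 0) l" unfolding l_def by (rule Lq_pth[OF x])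
  define y where "y = cat (k - 1) z (cat (Suc K0) l x)"
  have W: "cat (Suc K0) l x \<in> Sigma_M M" by (rule pth_cat_Sigma[OF p x]) simp
  have l0: "l 0 = z (k - 1)" using p by (simp add: pth_def)
  have yS: "y \<in> Sigma_M M" unfolding y_def
  proof (rule cat_Sigma[OF _ _ W])
    show "M (z j) (z (Suc j))" for j using z by (simp add: Sigma_M_def)
    assume "0 < k - 1"
    then have "Suc (k - 1 - 1) = k - 1" by simp
    moreover have "M (z (k - 1 - 1)) (z (Suc (k - 1 - 1)))" using z by (simp add: Sigma_M_def)
    ultimately show "M (z (k - 1 - 1)) (cat (Suc K0) l x 0)"
      using l0 by (simp add: cat_def)
  qed
  have ya: "agree k y z"
    unfolding agree_def
  proof (intro allI impI)
    fix i assume "i < k"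
    then consider "i < k - 1" | "i = k - 1" by linarith
    then show "y i = z i"
    proof cases
      case 1 then show ?thesis by (simp add: y_def cat_def)
    next
      case 2 then show ?thesis using l0 by (simp add: y_def cat_def)
    qed
  qed
  have "sh (k - 1 + Suc K0) y = x"
    unfolding y_def sh_def cat_def by (auto simp: fun_eq_iff)
  moreover have "k - 1 + Suc K0 = k + K0" using k1 by simp
  ultimately have "(k + K0, y) \<in> T x" using yS ya by (simp add: T_def)
  then show ?thesis by auto
qed

end


context constr begin

lemma bound:
  assumes p: "(n, y) \<in> T x"
  shows "S n y \<le> D x - real n * e"
proof -
  have y: "y \<in> Sigma_M M" and ya: "agree k y z" and yx0: "sh n y = x" using p by (auto simp: T_def)
  have x: "x \<in> Sigma_M M" using T_Sigma[OF p] .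
  have yx: "y (i + n) = x i" for i using yx0 by (metis sh_def)
  define l where "l = Lp (x (k - 1))"
  have lp: "pth M F K0 (x (k - 1)) (z 0) l" unfolding l_def by (rule Lp_pth[OF x])
  define P where "P = n + k + K0"
  define u where "u = cat (n + k - 1) y l"
  define q where "q = (\<lambda>t. u (t mod P))"
  have Ppos: "0 < P" using k1 by (simp add: P_def)
  have u1: "u t = y t" if "t < n + k" for t
  proof (cases "t < n + k - 1")
    case True then show ?thesis by (simp add: u_def cat_def)
  next
    case False
    then have "t = k - 1 + n" using that k1 by linarith
    moreover have "u t = l 0" using False that k1 by (simp add: u_def cat_def)
    ultimately show ?thesis using lp by (simp add: pth_def yx)
  qed
  have u2: "u t = l (t - (n + k - 1))" if "n + k - 1 \<le> t" for t
    using that by (simp add: u_def cat_def)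
  have uP: "u P = z 0"
  proof -
    have "P - (n + k - 1) = Suc K0" using k1 by (simp add: P_def)
    then show ?thesis using u2[of P] lp by (simp add: P_def pth_def)
  qed
  have u0: "u 0 = z 0" using u1[of 0] ya k1 by (simp add: agree_def)
  have adm: "M (u t) (u (Suc t))" if "t < P" for t
  proof (cases "Suc t < n + k")
    case True then show ?thesis using u1[of t] u1[of "Suc t"] y by (simp add: Sigma_M_def)
  next
    case False
    then have "n + k - 1 \<le> t" by linarith
    moreover have "t - (n + k - 1) \<le> K0" using that by (simp add: P_def)
    moreover have "Suc t - (n + k - 1) = Suc (t - (n + k - 1))" using \<open>n + k - 1 \<le> t\<close> by simp
    ultimately show ?thesis using u2[of t] u2[of "Suc t"] lp by (simp add: pth_def)
  qed
  have qS: "q \<in> Sigma_M M" unfolding Sigma_M_def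
  proof (intro CollectI allI)
    fix t
    define r where "r = t mod P"
    have r: "r < P" using Ppos by (simp add: r_def)
    show "M (q t) (q (Suc t))"
    proof (cases "Suc r = P")
      case True
      then have "Suc t mod P = 0" unfolding r_def by (metis mod_Suc)
      then show ?thesis using adm[OF r] True uP u0 by (simp add: q_def r_def[symmetric])
    next
      case False
      then have "Suc t mod P = Suc r" unfolding r_def by (metis mod_Suc)
      then show ?thesis using adm[OF r] by (simp add: q_def r_def[symmetric])
    qed
  qed
  have qper: "sh P q = q" by (simp add: sh_def q_def fun_eq_iff)
  have qa: "agree k (sh j y) (sh j q)" if "j < n" for j
    unfolding agree_def
  proof (intro allI impI)
    fix i assume "i < k"
    then have "i + j < n + k" "i + j < P" using that by (auto simp: P_def)
    then show "sh j y i = sh j q i" using u1 by (simp add: sh_def q_def)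
  qed
  have qb: "agree k (sh t (v x)) (sh (n + t) q)" if t: "t < k + K0" for t
    unfolding agree_def
  proof (intro allI impI)
    fix i assume i: "i < k"
    have vs: "v x s = (if s < k - 1 then x s else if s - (k - 1) < Suc K0 then l (s - (k - 1)) else z (s - (k - 1) - Suc K0))" for s
      by (simp add: v_def cat_def l_def)
    show "sh t (v x) i = sh (n + t) q i"
    proof (cases "i + t < k + K0")
      case True
      then have lt: "i + (n + t) < P" by (simp add: P_def)
      show ?thesis
      proof (cases "i + t < k - 1")
        case True
        then show ?thesis using lt u1[of "i + (n + t)"] yx[of "i + t"] vs[of "i + t"]
          by (simp add: sh_def q_def add.commute add.left_commute)
      next
        case False
        then have "i + t - (k - 1) < Suc K0" "i + (n + t) - (n + k - 1) = i + t - (k - 1)"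
          using \<open>i + t < k + K0\<close> k1 by auto
        moreover have "n + k - 1 \<le> i + (n + t)" using False by linarith
        ultimately show ?thesis using lt u2[of "i + (n + t)"] vs[of "i + t"] False
          by (simp add: sh_def q_def)
      qed
    next
      case False
      define s where "s = i + t - (k + K0)"
      have s: "s < k" "i + (n + t) = s + P" using False i t by (auto simp: s_def P_def)
      have "(s + P) mod P = s" using s(1) by (simp add: P_def)
      then have "(i + (n + t)) mod P = s" using s(2) by simp
      then have "q (i + (n + t)) = z s" using u1[of s] s ya by (simp add: q_def agree_def)
      moreover have "\<not> i + t < k - 1" "\<not> i + t - (k - 1) < Suc K0" "i + t - (k - 1) - Suc K0 = s"
        using False k1 unfolding s_def by linarith+
      then have "v x (i + t) = z s" using vs[of "i + t"] by simp
      ultimately show ?thesis by (simp add: sh_def add.commute add.left_commute)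
    qed
  qed
  have A1: "A (sh j y) \<le> A (sh j q) + e" if "j < n" for j
  proof -
    have "\<bar>A (sh j y) - A (sh j q)\<bar> \<le> (c - b) / 2"
      using kUC qa[OF that] sh_Sigma[OF y] sh_Sigma[OF qS] by blast
    then show ?thesis unfolding e_def by linarith
  qed
  have A2: "A (sh t (v x)) \<le> A (sh (n + t) q) + e" if "t < k + K0" for t
  proof -
    have "\<bar>A (sh t (v x)) - A (sh (n + t) q)\<bar> \<le> (c - b) / 2"
      using kUC qb[OF that] sh_Sigma[OF v_Sigma[OF x]] sh_Sigma[OF qS] by blast
    then show ?thesis unfolding e_def by linarith
  qed
  have sP: "(\<Sum>j<P. A (sh j q)) \<le> real P * b" by (rule per[OF qS Ppos qper])
  have split: "(\<Sum>j<P. A (sh j q)) = (\<Sum>j<n. A (sh j q)) + (\<Sum>t<k + K0. A (sh (n + t) q))"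
    unfolding P_def add.assoc by (rule sum_split_add)
  have s1: "(\<Sum>j<n. A (sh j y)) \<le> (\<Sum>j<n. A (sh j q)) + real n * e"
  proof -
    have "(\<Sum>j<n. A (sh j y)) \<le> (\<Sum>j<n. A (sh j q) + e)" by (rule sum_mono) (simp add: A1)
    then show ?thesis by (simp add: sum.distrib)
  qed
  have s2: "(\<Sum>t<k + K0. A (sh t (v x))) \<le> (\<Sum>t<k + K0. A (sh (n + t) q)) + real (k + K0) * e"
  proof -
    have "(\<Sum>t<k + K0. A (sh t (v x))) \<le> (\<Sum>t<k + K0. A (sh (n + t) q) + e)"
      by (rule sum_mono) (simp add: A2)
    then show ?thesis by (simp add: sum.distrib)
  qed
  have Sn: "S n y = (\<Sum>j<n. A (sh j y)) - real n * c" by (simp add: S_def sum_subtractf)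
  have ce: "c = b + 2 * e" unfolding e_def by (simp add: field_simps)
  have e1: "real n * c = real n * b + 2 * (real n * e)" unfolding e_def by (simp add: field_simps)
  have e2: "real P * b = real n * b + real (k + K0) * b" by (simp add: P_def algebra_simps)
  have e3: "real (k + K0) * (b + e) = real (k + K0) * b + real (k + K0) * e" by (simp add: algebra_simps)
  have D': "D x = real (k + K0) * (b + e) - (\<Sum>t<k + K0. A (sh t (v x)))" by (simp add: D_def)
  show ?thesis
    using s1 s2 sP split Sn e1 e2 e3 D' by linarith
qed

end


context constr begin

lemma bdd: "bdd_above (FF x)"
proof -
  have "s \<le> D x" if "s \<in> FF x" for s
  proof -
    obtain n y where p: "(n, y) \<in> T x" "s = S n y" using \<open>s \<in> FF x\<close> by (auto simp: FF_def)
    have "0 \<le> real n * e" using e_pos by simp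
    then show ?thesis using bound[OF p(1)] p(2) by linarith
  qed
  then show ?thesis by (auto simp: bdd_above_def)
qed

lemma FF_ne: "x \<in> Sigma_M M \<Longrightarrow> FF x \<noteq> {}"
  using T_ne by (auto simp: FF_def)

lemma f_upper: "(n, y) \<in> T x \<Longrightarrow> S n y \<le> f x"
  unfolding f_def by (rule cSup_upper[OF _ bdd]) (force simp: FF_def)

lemma step: assumes x: "x \<in> Sigma_M M" shows "A x + f x - f (shift x) \<le> c"
proof -
  have "f x \<le> f (shift x) - A x + c"
    unfolding f_def[of x]
  proof (rule cSup_least[OF FF_ne[OF x]])
    fix s assume "s \<in> FF x"
    then obtain n y where p: "(n, y) \<in> T x" "s = S n y" by (auto simp: FF_def)
    have p2: "(Suc n, y) \<in> T (shift x)" using p(1) by (auto simp: T_def sh_Suc)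
    have "S (Suc n) y = S n y + A x - c"
      using p(1) by (simp add: S_def T_def)
    then show "s \<le> f (shift x) - A x + c" using f_upper[OF p2] p(2) by linarith
  qed
  then show ?thesis by linarith
qed

lemma transfer:
  assumes x': "x' \<in> Sigma_M M" and ag: "agree m x x'" and km: "k \<le> m"
    and Am: "\<forall>a\<in>Sigma_M M. \<forall>a'\<in>Sigma_M M. agree m a a' \<longrightarrow> \<bar>A a - A a'\<bar> \<le> \<eta>"
    and p: "(n, y) \<in> T x"
  shows "\<exists>y'. (n, y') \<in> T x' \<and> S n y - real n * \<eta> \<le> S n y'"
proof -
  have y: "y \<in> Sigma_M M" and ya: "agree k y z" and yx0: "sh n y = x" using p by (auto simp: T_def)
  have yx: "y (i + n) = x i" for i using yx0 by (metis sh_def)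
  define y' where "y' = cat n y x'"
  have x0: "x' 0 = x 0" using ag km k1 by (auto simp: agree_def)
  have y'S: "y' \<in> Sigma_M M" unfolding y'_def
  proof (rule cat_Sigma[OF _ _ x'])
    show "M (y j) (y (Suc j))" for j using y by (simp add: Sigma_M_def)
    assume "0 < n"
    have "M (y (n - 1)) (y (Suc (n - 1)))" using y by (simp add: Sigma_M_def)
    moreover have "Suc (n - 1) = n" using \<open>0 < n\<close> by simp
    ultimately have "M (y (n - 1)) (y n)" by simp
    then show "M (y (n - 1)) (x' 0)" using x0 yx[of 0] by simp
  qed
  have y'a: "agree k y' z" unfolding agree_def
  proof (intro allI impI)
    fix i assume i: "i < k"
    show "y' i = z i"
    proof (cases "i < n")
      case True then show ?thesis using ya i by (simp add: y'_def cat_def agree_def)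
    next
      case False
      then have "x' (i - n) = x (i - n)" using ag km i by (auto simp: agree_def)
      moreover have "x (i - n) = y i" using yx[of "i - n"] False by simp
      ultimately show ?thesis using False ya i by (simp add: y'_def cat_def agree_def)
    qed
  qed
  have "(n, y') \<in> T x'" using y'S y'a by (simp add: T_def y'_def)
  moreover have "S n y - real n * \<eta> \<le> S n y'"
  proof -
    have "A (sh j y) - c - \<eta> \<le> A (sh j y') - c" if j: "j < n" for j
    proof -
      have "agree m (sh j y) (sh j y')" unfolding agree_def
      proof (intro allI impI)
        fix i assume i: "i < m"
        show "sh j y i = sh j y' i"
        proof (cases "i + j < n")
          case True then show ?thesis by (simp add: sh_def y'_def cat_def)
        next
          case False
          then have "x' (i + j - n) = x (i + j - n)" using ag i j by (auto simp: agree_def)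
          moreover have "x (i + j - n) = y (i + j)" using yx[of "i + j - n"] False by simp
          ultimately show ?thesis using False by (simp add: sh_def y'_def cat_def)
        qed
      qed
      then have "\<bar>A (sh j y) - A (sh j y')\<bar> \<le> \<eta>" using Am sh_Sigma[OF y] sh_Sigma[OF y'S] by blast
      then show ?thesis by linarith
    qed
    then have "(\<Sum>j<n. A (sh j y) - c - \<eta>) \<le> (\<Sum>j<n. A (sh j y') - c)" by (intro sum_mono) auto
    then show ?thesis by (simp add: S_def sum_subtractf)
  qed
  ultimately show ?thesis by blast
qed

end


context constr begin

lemma f_C0: "f \<in> C0 lam M"
  unfolding C0_def
proof (intro CollectI ballI allI impI)
  fix x and ep :: real assume x: "x \<in> Sigma_M M" and ep: "0 < ep"
  define d' where "d' = min (1/4) (ep/4)"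
  have d': "0 < d'" "d' \<le> 1/4" "d' \<le> ep/4" using ep by (auto simp: d'_def)
  define N where "N = (D x - f x + 2) / e"
  define \<eta> where "\<eta> = d' / (\<bar>N\<bar> + 1)"
  have eta: "0 < \<eta>" using d' by (simp add: \<eta>_def add_pos_nonneg)
  have Neta: "\<bar>N\<bar> * \<eta> < d'" using d' by (simp add: \<eta>_def field_simps add_pos_nonneg)
  have nN: "real n * \<eta> < d'" if "real n \<le> N" for n :: nat
  proof -
    have "real n * \<eta> \<le> \<bar>N\<bar> * \<eta>" using that eta by (intro mult_right_mono) auto
    then show ?thesis using Neta by linarith
  qed
  have ne_N: "real n \<le> N" if "real n * e \<le> D x - f x + 2" for n :: nat
    using that e_pos by (simp add: N_def pos_le_divide_eq)
  obtain m0 where m0: "\<forall>a\<in>Sigma_M M. \<forall>a'\<in>Sigma_M M. agree m0 a a' \<longrightarrow> \<bar>A a - A a'\<bar> \<le> \<eta>"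
    using UC[OF eta] by blast
  define m where "m = max m0 k"
  have km: "k \<le> m" by (simp add: m_def)
  have Am: "\<forall>a\<in>Sigma_M M. \<forall>a'\<in>Sigma_M M. agree m a a' \<longrightarrow> \<bar>A a - A a'\<bar> \<le> \<eta>"
    using m0 agree_mono[of m _ _ m0] by (simp add: m_def)
  show "\<exists>\<delta>>0. \<forall>y\<in>Sigma_M M. dist_lam lam x y < \<delta> \<longrightarrow> \<bar>f y - f x\<bar> < ep"
  proof (intro exI[of _ "lam ^ m"] conjI ballI impI)
    show "0 < lam ^ m" using lam0 by simp
    fix x' assume x': "x' \<in> Sigma_M M" and dx: "dist_lam lam x x' < lam ^ m"
    have ag: "agree m x x'" by (rule dist_agree[OF lam0 lam1 dx])
    have Dx: "D x' = D x" using D_agree[OF agree_mono[OF ag km]] by simp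
    have i: "f x - 2 * d' < f x'"
    proof -
      have "f x - d' < Sup (FF x)" using d' by (simp add: f_def)
      then obtain s where "s \<in> FF x" "f x - d' < s"
        using less_cSup_iff[OF FF_ne[OF x] bdd] by blast
      then obtain n y where p: "(n, y) \<in> T x" "f x - d' < S n y" by (auto simp: FF_def)
      have "real n * e \<le> D x - f x + 2" using bound[OF p(1)] p(2) d' by linarith
      then have n: "real n * \<eta> < d'" by (intro nN ne_N)
      obtain y' where y': "(n, y') \<in> T x'" "S n y - real n * \<eta> \<le> S n y'"
        using transfer[OF x' ag km Am p(1)] by blast
      show ?thesis using f_upper[OF y'(1)] y'(2) p(2) n by linarith
    qed
    have ii: "f x' - 2 * d' < f x"
    proof -
      have "f x' - d' < Sup (FF x')" using d' by (simp add: f_def)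
      then obtain s where "s \<in> FF x'" "f x' - d' < s"
        using less_cSup_iff[OF FF_ne[OF x'] bdd] by blast
      then obtain n y' where p: "(n, y') \<in> T x'" "f x' - d' < S n y'" by (auto simp: FF_def)
      have "real n * e \<le> D x - f x + 2" using bound[OF p(1)] p(2) d' i Dx by linarith
      then have n: "real n * \<eta> < d'" by (intro nN ne_N)
      obtain y where y: "(n, y) \<in> T x" "S n y' - real n * \<eta> \<le> S n y"
        using transfer[OF x agree_sym[OF ag] km Am p(1)] by blast
      show ?thesis using f_upper[OF y(1)] y(2) p(2) n by linarith
    qed
    show "\<bar>f x' - f x\<bar> < ep" using i ii d' by linarith
  qed
qed

lemma main: "\<exists>g\<in>C0 lam M. \<forall>x\<in>Sigma_M M. A x + g x - g (shift x) \<le> c"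
  using f_C0 step by blast

end


theorem mainTheorem3:
  fixes lam :: real and M :: "nat \<Rightarrow> nat \<Rightarrow> bool" and F :: "nat set" and K0 :: nat
    and A :: "(nat \<Rightarrow> nat) \<Rightarrow> real"
  assumes "0 < lam" and "lam < 1"
    and "primitive_with M F K0"
    and "unif_cont_pot lam M A"
    and "\<exists>C. \<forall>x\<in>Sigma_M M. A x \<le> C"
    and "\<exists>c. \<forall>x\<in>(\<Union>i\<in>F. cyl M i). c \<le> A x"
  shows "beta M A =
    (INF f\<in>C0 lam M. SUP x\<in>Sigma_M M. ereal (A x + f x - f (shift x)))"
proof -
  let ?R = "(INF f\<in>C0 lam M. SUP x\<in>Sigma_M M. ereal (A x + f x - f (shift x)))"
  have Am: "A \<in> borel_measurable (borel_Sigma M)" by (rule A_meas[OF assms(1,2,4)])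
  obtain C where C: "\<forall>x\<in>Sigma_M M. A x \<le> C" using assms(5) by blast
  have le1: "beta M A \<le> ?R"
    unfolding beta_def
  proof (rule SUP_least, rule INF_greatest)
    fix \<mu> f assume "\<mu> \<in> invariant_probs M" "f \<in> C0 lam M"
    then show "ext_integral \<mu> A \<le> (SUP x\<in>Sigma_M M. ereal (A x + f x - f (shift x)))"
      using lower_bound[OF _ C0_meas[OF assms(1,2)] Am C] by blast
  qed
  have z0: "(\<lambda>_. 0) \<in> C0 lam M" unfolding C0_def by (auto intro: exI[of _ 1])
  have le2: "?R \<le> beta M A"
  proof (cases "Sigma_M M = {}")
    case True
    have "?R \<le> (SUP x\<in>Sigma_M M. ereal (A x + 0 - 0))"
      using INF_lower[OF z0, of "\<lambda>f. SUP x\<in>Sigma_M M. ereal (A x + f x - f (shift x))"] by simp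
    also have "\<dots> = -\<infinity>" using True by (simp add: bot_ereal_def)
    finally show ?thesis by simp
  next
    case False
    then obtain z where z: "z \<in> Sigma_M M" by blast
    have key: "?R \<le> ereal c" if bb: "beta M A \<le> ereal b" and bc: "b < c" for b c
    proof -
      obtain k0 where k0: "\<forall>a\<in>Sigma_M M. \<forall>a'\<in>Sigma_M M. agree k0 a a' \<longrightarrow> \<bar>A a - A a'\<bar> \<le> (c - b) / 2"
        using UC_agree[OF assms(1,2,4), of "(c - b) / 2"] bc by auto
      have k1: "\<forall>a\<in>Sigma_M M. \<forall>a'\<in>Sigma_M M. agree (Suc k0) a a' \<longrightarrow> \<bar>A a - A a'\<bar> \<le> (c - b) / 2"
        using k0 agree_mono[of "Suc k0" _ _ k0] by simp
      have per: "(\<Sum>j<P. A (sh j q)) \<le> real P * b"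
        if "q \<in> Sigma_M M" "0 < P" "sh P q = q" for q P
      proof -
        have "ereal ((\<Sum>j<P. A (sh j q)) / P) \<le> ereal b" using per_bound[OF Am that] bb by order
        then have "(\<Sum>j<P. A (sh j q)) / P \<le> b" by simp
        then show ?thesis using that(2) by (simp add: divide_le_eq mult.commute)
      qed
      interpret constr M F K0 A lam b c z "Suc k0"
        by unfold_locales (use assms(1,2,3) UC_agree[OF assms(1,2,4)] per z bc k1 in auto)
      obtain g where g: "g \<in> C0 lam M" "\<forall>x\<in>Sigma_M M. A x + g x - g (shift x) \<le> c"
        using main by blast
      have "?R \<le> (SUP x\<in>Sigma_M M. ereal (A x + g x - g (shift x)))" by (rule INF_lower[OF g(1)])
      also have "\<dots> \<le> ereal c" using g(2) by (intro SUP_least) simp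
      finally show ?thesis .
    qed
    show ?thesis
    proof (rule ccontr)
      assume "\<not> ?R \<le> beta M A"
      then have "beta M A < ?R" by simp
      then obtain c where c: "beta M A < ereal c" "ereal c < ?R" using ereal_dense2 by blast
      then obtain b where b: "beta M A < ereal b" "ereal b < ereal c" using ereal_dense2 by blast
      have "?R \<le> ereal c" using key[of b c] b by simp
      then show False using c by simp
    qed
  qed
  show ?thesis using le1 le2 by (rule antisym)
qed


end
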